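(* Let $G$ be a connected graph with $n\geq 2$ vertices and $m$ edges, and let $T(G)$ be its triangulation. Then $$R(T(G))=\frac{2}{3}R(G)+\frac{1}{3}R^+(G)+\frac{1}{6}R^*(G)+\frac{3m^2-n^2+2mn-2m+n}{6}.$$
   Context: All graphs are finite, undirected, without loops or multiple edges. For a connected graph $H$ and vertices $i,j$, the resistance distance $\Omega_{ij}$ is the effective resistance between $i$ and $j$ in the electrical network obtained from $H$ by replacing each edge by a unit resistor. With $d_i$ the degree of vertex $i$ in $H$ and sums over unordered pairs of distinct vertices of $H$: $R(H)=\sum_{\{i,j\}\subseteq V(H)}\Omega_{ij}$ (Kirchhoff index), $R^+(H)=\sum_{\{i,j\}\subseteq V(H)}(d_i+d_j)\Omega_{ij}$ (additive degree-Kirchhoff index), and $R^*(H)=\sum_{\{i,j\}\subseteq V(H)}d_id_j\Omega_{ij}$ (multiplicative degree-Kirchhoff index). The triangulation $T(G)$ is obtained from $G$ by adding, for each edge $uv$, a new vertex $w$ adjacent to both $u$ and $v$ (keeping the edge $uv$), so each edge becomes a triangle $uwv$. *)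

theory Defs
  imports Complex_Main
begin

definition simple_graph :: "'a set \<Rightarrow> 'a set set \<Rightarrow> bool" where
  "simple_graph V E \<longleftrightarrow> finite V \<and>
     (\<forall>e\<in>E. \<exists>u v. u \<in> V \<and> v \<in> V \<and> u \<noteq> v \<and> e = {u, v})"

definition adj :: "'a set set \<Rightarrow> 'a \<Rightarrow> 'a \<Rightarrow> bool" where
  "adj E u v \<longleftrightarrow> {u, v} \<in> E"

definition connected_graph :: "'a set \<Rightarrow> 'a set set \<Rightarrow> bool" where
  "connected_graph V E \<longleftrightarrow> simple_graph V E \<and> V \<noteq> {} \<and>
     (\<forall>u\<in>V. \<forall>v\<in>V. (adj E)\<^sup>*\<^sup>* u v)"

definition degree :: "'a set \<Rightarrow> 'a set set \<Rightarrow> 'a \<Rightarrow> nat" where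
  "degree V E v = card {u \<in> V. adj E v u}"

text \<open>Electrical network with unit resistors: a unit current enters at i and leaves at j.\<close>
definition unit_current_potential :: "'a set \<Rightarrow> 'a set set \<Rightarrow> 'a \<Rightarrow> 'a \<Rightarrow> ('a \<Rightarrow> real) \<Rightarrow> bool" where
  "unit_current_potential V E i j x \<longleftrightarrow>
     (\<forall>v\<in>V. (\<Sum>u\<in>{u \<in> V. adj E v u}. x v - x u) =
              (if v = i then 1 else 0) - (if v = j then 1 else 0))"

text \<open>Effective resistance = potential difference between i and j under unit current
  (well defined for connected graphs, since potentials are unique up to an additive constant).\<close>
definition resistance :: "'a set \<Rightarrow> 'a set set \<Rightarrow> 'a \<Rightarrow> 'a \<Rightarrow> real" where
  "resistance V E i j = (THE r. \<exists>x. unit_current_potential V E i j x \<and> r = x i - x j)"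

text \<open>Sums over unordered pairs of distinct vertices, written as half of the sum
  over ordered pairs (the summands are symmetric in i, j).\<close>
definition kirchhoff :: "'a set \<Rightarrow> 'a set set \<Rightarrow> real" where
  "kirchhoff V E = (\<Sum>i\<in>V. \<Sum>j\<in>V - {i}. resistance V E i j) / 2"

definition add_deg_kirchhoff :: "'a set \<Rightarrow> 'a set set \<Rightarrow> real" where
  "add_deg_kirchhoff V E = (\<Sum>i\<in>V. \<Sum>j\<in>V - {i}.
      (real (degree V E i) + real (degree V E j)) * resistance V E i j) / 2"

definition mult_deg_kirchhoff :: "'a set \<Rightarrow> 'a set set \<Rightarrow> real" where
  "mult_deg_kirchhoff V E = (\<Sum>i\<in>V. \<Sum>j\<in>V - {i}.
      (real (degree V E i) * real (degree V E j)) * resistance V E i j) / 2"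

text \<open>Triangulation: old vertices Inl v, a new vertex Inr e for every edge e.\<close>
definition tri_vertices :: "'a set \<Rightarrow> 'a set set \<Rightarrow> ('a + 'a set) set" where
  "tri_vertices V E = Inl ` V \<union> Inr ` E"

definition tri_edges :: "'a set set \<Rightarrow> ('a + 'a set) set set" where
  "tri_edges E = (\<lambda>e. Inl ` e) ` E \<union> {{Inl u, Inr e} | u e. e \<in> E \<and> u \<in> e}"

end

theory Submission
  imports Defs "Jordan_Normal_Form.Determinant"
begin


definition lap :: "'a set \<Rightarrow> 'a set set \<Rightarrow> ('a \<Rightarrow> real) \<Rightarrow> 'a \<Rightarrow> real" where
  "lap V E f v = (\<Sum>u\<in>{u \<in> V. adj E v u}. f v - f u)"

lemma ucp_lap: "unit_current_potential V E i j x \<longleftrightarrow>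
   (\<forall>v\<in>V. lap V E x v = (if v = i then 1 else 0) - (if v = j then 1 else 0))"
  unfolding unit_current_potential_def lap_def by simp

lemma adj_sym: "adj E u v = adj E v u"
  unfolding adj_def by (simp add: insert_commute)

lemma sg_adj: "simple_graph V E \<Longrightarrow> adj E u v \<Longrightarrow> u \<in> V \<and> v \<in> V \<and> u \<noteq> v"
  unfolding simple_graph_def adj_def
  by (metis doubleton_eq_iff)

lemma sg_finite: "simple_graph V E \<Longrightarrow> finite V"
  unfolding simple_graph_def by simp

lemma sg_finite_E: "simple_graph V E \<Longrightarrow> finite E"
proof -
  assume s: "simple_graph V E"
  have "E \<subseteq> Pow V"
  proof
    fix e assume "e \<in> E"
    then obtain u v where "u \<in> V" "v \<in> V" "e = {u, v}" using s unfolding simple_graph_def by meson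
    thus "e \<in> Pow V" by simp
  qed
  thus ?thesis using finite_Pow_iff[THEN iffD2, OF sg_finite[OF s]] by (rule finite_subset)
qed

lemma sum_nbr: "finite V \<Longrightarrow> (\<Sum>u\<in>{u \<in> V. adj E v u}. F u) = (\<Sum>u\<in>V. if adj E v u then F u else 0)"
  by (simp add: sum.inter_filter)

lemma lap_if: "finite V \<Longrightarrow> lap V E f v = (\<Sum>u\<in>V. if adj E v u then f v - f u else 0)"
  unfolding lap_def by (rule sum_nbr)

lemma double_antisym:
  assumes "finite V" "\<And>u v. A u v = A v u"
  shows "(\<Sum>v\<in>V. \<Sum>u\<in>V. if A v u then F v u else 0) = (\<Sum>v\<in>V. \<Sum>u\<in>V. if A v u then F u v else 0)"
proof -
  have "(\<Sum>v\<in>V. \<Sum>u\<in>V. if A v u then F v u else 0) = (\<Sum>u\<in>V. \<Sum>v\<in>V. if A v u then F v u else 0)"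
    by (rule sum.swap)
  also have "\<dots> = (\<Sum>v\<in>V. \<Sum>u\<in>V. if A v u then F u v else 0)"
  proof (intro sum.cong refl)
    fix u v show "(if A u v then F u v else 0) = (if A v u then F u v else 0)" using assms(2)[of u v] by simp
  qed
  finally show ?thesis .
qed

lemma lap_sum_zero:
  assumes "simple_graph V E"
  shows "(\<Sum>v\<in>V. lap V E f v) = 0"
proof -
  have fin: "finite V" using assms sg_finite by blast
  let ?S = "(\<Sum>v\<in>V. \<Sum>u\<in>V. if adj E v u then f v - f u else 0)"
  have "?S = (\<Sum>v\<in>V. \<Sum>u\<in>V. if adj E v u then f u - f v else 0)"
    by (rule double_antisym[OF fin adj_sym])
  also have "\<dots> = (\<Sum>v\<in>V. \<Sum>u\<in>V. - (if adj E v u then f v - f u else 0))"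
    by (intro sum.cong) auto
  also have "\<dots> = - ?S" by (simp add: sum_negf)
  finally have "?S = 0" by simp
  thus ?thesis using lap_if[OF fin] by simp
qed

lemma lap_symm:
  assumes "simple_graph V E"
  shows "(\<Sum>v\<in>V. g v * lap V E f v) = (\<Sum>v\<in>V. f v * lap V E g v)"
proof -
  have fin: "finite V" using assms sg_finite by blast
  define Q :: "('a \<Rightarrow> real) \<Rightarrow> ('a \<Rightarrow> real) \<Rightarrow> real" where "Q = (\<lambda>f g. (\<Sum>v\<in>V. \<Sum>u\<in>V. if adj E v u then g v * (f v - f u) else 0))"
  have 1: "\<And>f g. (\<Sum>v\<in>V. g v * lap V E f v) = Q f g"
    unfolding Q_def lap_if[OF fin] by (simp add: sum_distrib_left if_distrib cong: if_cong)
  have 2: "\<And>f g. Q f g = (\<Sum>v\<in>V. \<Sum>u\<in>V. if adj E v u then g u * (f u - f v) else 0)"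
    unfolding Q_def by (rule double_antisym[OF fin adj_sym])
  have 3: "\<And>f g. 2 * Q f g = (\<Sum>v\<in>V. \<Sum>u\<in>V. if adj E v u then (g v - g u) * (f v - f u) else 0)"
  proof -
    fix f g
    have "2 * Q f g = Q f g + (\<Sum>v\<in>V. \<Sum>u\<in>V. if adj E v u then g u * (f u - f v) else 0)"
      using 2 by simp
    also have "\<dots> = (\<Sum>v\<in>V. \<Sum>u\<in>V. if adj E v u then (g v - g u) * (f v - f u) else 0)"
      unfolding Q_def sum.distrib[symmetric] by (rule sum.cong, simp, rule sum.cong, simp, simp add: algebra_simps)
    finally show "2 * Q f g = \<dots>" .
  qed
  have "2 * Q f g = 2 * Q g f" unfolding 3 by (intro sum.cong refl) (simp add: mult.commute)
  thus ?thesis using 1 by simp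
qed



lemma cg_sg: "connected_graph V E \<Longrightarrow> simple_graph V E"
  unfolding connected_graph_def by simp

lemma max_prop:
  assumes cg: "connected_graph V E" and w: "w \<in> V" and le: "\<forall>v\<in>V. y v \<le> M" and yw: "y w = M"
    and harm: "\<forall>v\<in>V. y v = M \<longrightarrow> lap V E y v = 0"
  shows "\<forall>u\<in>V. y u = M"
proof -
  have sg: "simple_graph V E" using cg cg_sg by blast
  have fin: "finite V" using sg sg_finite by blast
  have nbr: "y u = M" if "v \<in> V" "y v = M" "adj E v u" for v u
  proof -
    have uV: "u \<in> V" using sg_adj[OF sg that(3)] by blast
    have "(\<Sum>u\<in>{u \<in> V. adj E v u}. y v - y u) = 0" using harm that unfolding lap_def by blast
    moreover have "\<forall>x\<in>{u \<in> V. adj E v u}. 0 \<le> y v - y x" using le that(2) by auto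
    ultimately have "\<forall>x\<in>{u \<in> V. adj E v u}. y v - y x = 0"
      using sum_nonneg_eq_0_iff[of "{u \<in> V. adj E v u}" "\<lambda>x. y v - y x"] fin by auto
    thus ?thesis using uV that by auto
  qed
  show ?thesis
  proof
    fix u assume u: "u \<in> V"
    have "(adj E)\<^sup>*\<^sup>* w u" using cg w u unfolding connected_graph_def by blast
    hence "u \<in> V \<and> y u = M"
    proof (induction rule: rtranclp_induct)
      case base then show ?case using w yw by simp
    next
      case (step a b) then show ?case using nbr sg_adj[OF sg] by blast
    qed
    thus "y u = M" by simp
  qed
qed

lemma harmonic_const:
  assumes cg: "connected_graph V E" and harm: "\<forall>v\<in>V. lap V E y v = 0" and a: "a \<in> V" and b: "b \<in> V"
  shows "y a = y b"
proof -
  have fin: "finite V" using cg cg_sg sg_finite by blast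
  have ne: "V \<noteq> {}" using a by blast
  have "Max (y ` V) \<in> y ` V" using Max_in[of "y ` V"] fin ne by auto
  then obtain w where w: "w \<in> V" "y w = Max (y ` V)" by auto
  have "\<forall>u\<in>V. y u = Max (y ` V)"
    using max_prop[OF cg w(1), of y "Max (y ` V)"] w(2) fin harm by auto
  thus ?thesis using a b by simp
qed

lemma lap_diff: "lap V E (\<lambda>v. f v - g v) v = lap V E f v - lap V E g v"
  unfolding lap_def by (simp add: sum_subtractf[symmetric] algebra_simps)

lemma lap_add: "lap V E (\<lambda>v. f v + g v) v = lap V E f v + lap V E g v"
  unfolding lap_def by (simp add: sum.distrib[symmetric] algebra_simps)

lemma lap_scale: "lap V E (\<lambda>v. c * f v) v = c * lap V E f v"
  unfolding lap_def by (simp add: sum_distrib_left algebra_simps)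

lemma lap_sum: "finite A \<Longrightarrow> lap V E (\<lambda>v. \<Sum>k\<in>A. f k v) v = (\<Sum>k\<in>A. lap V E (f k) v)"
  unfolding lap_def by (simp add: sum_subtractf[symmetric] sum.swap[of _ _ A])

lemma resistance_eq:
  assumes cg: "connected_graph V E" and i: "i \<in> V" and j: "j \<in> V"
    and x: "unit_current_potential V E i j x"
  shows "resistance V E i j = x i - x j"
  unfolding resistance_def
proof (rule the_equality)
  show "\<exists>x'. unit_current_potential V E i j x' \<and> x i - x j = x' i - x' j" using x by blast
next
  fix r assume "\<exists>x'. unit_current_potential V E i j x' \<and> r = x' i - x' j"
  then obtain x' where x': "unit_current_potential V E i j x'" "r = x' i - x' j" by blast
  have "\<forall>v\<in>V. lap V E (\<lambda>v. x v - x' v) v = 0"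
    using x x'(1) unfolding ucp_lap lap_diff by simp
  hence "x i - x' i = x j - x' j" using harmonic_const[OF cg _ i j] by blast
  thus "r = x i - x j" using x'(2) by simp
qed



lemma grounded_unique:
  assumes cg: "connected_graph V E" and j: "j \<in> V"
    and harm: "\<forall>v\<in>V-{j}. lap V E y v = 0" and yj: "y j = 0"
  shows "\<forall>v\<in>V. y v = 0"
proof -
  have fin: "finite V" using cg cg_sg sg_finite by blast
  have ne: "V \<noteq> {}" using j by blast
  have upper: "\<forall>v\<in>V. z v \<le> 0" if harmz: "\<forall>v\<in>V-{j}. lap V E z v = 0" and zj: "z j = 0" for z
  proof (rule ccontr)
    assume "\<not> (\<forall>v\<in>V. z v \<le> 0)"
    then obtain v0 where v0: "v0 \<in> V" "z v0 > 0" by force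
    have "Max (z ` V) \<in> z ` V" using Max_in[of "z ` V"] fin ne by auto
    then obtain w where w: "w \<in> V" "z w = Max (z ` V)" by auto
    have "z v0 \<le> Max (z ` V)" using v0 fin Max_ge[of "z ` V" "z v0"] by blast
    hence Mpos: "Max (z ` V) > 0" using v0 by linarith
    have "\<forall>u\<in>V. z u = Max (z ` V)"
      using max_prop[OF cg w(1), of z "Max (z ` V)"] w(2) fin harmz zj Mpos by force
    thus False using j zj Mpos by force
  qed
  have 1: "\<forall>v\<in>V. y v \<le> 0" using upper harm yj by blast
  have "\<forall>v\<in>V-{j}. lap V E (\<lambda>v. 0 - y v) v = 0" using harm unfolding lap_diff by (simp add: lap_def)
  hence 2: "\<forall>v\<in>V. 0 - y v \<le> 0" using upper[of "\<lambda>v. 0 - y v"] yj by simp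
  show ?thesis using 1 2 by force
qed

lemma mat_apply:
  assumes "x \<in> carrier_vec n" "a < n"
  shows "(mat n n (\<lambda>(a,k). F a k) *\<^sub>v x) $ a = (\<Sum>k\<in>{0..<n}. F a k * x $ k)"
  using assms by (simp add: scalar_prod_def)

definition gmat :: "'a set \<Rightarrow> 'a set set \<Rightarrow> 'a \<Rightarrow> 'a \<Rightarrow> 'a \<Rightarrow> real" where
  "gmat V E j v u = (if v = j then (if u = v then 1 else 0)
      else (if u = v then real (card {w \<in> V. adj E v w}) else 0) - (if adj E v u then 1 else 0))"

lemma gmat_sum:
  assumes sg: "simple_graph V E" and v: "v \<in> V"
  shows "(\<Sum>u\<in>V. gmat V E j v u * y u) = (if v = j then y j else lap V E y v)"
proof -
  have fin: "finite V" using sg sg_finite by blast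
  show ?thesis
  proof (cases "v = j")
    case True
    have "(\<Sum>u\<in>V. gmat V E j v u * y u) = (\<Sum>u\<in>V. if u = j then y u else 0)"
      by (rule sum.cong) (auto simp: gmat_def True)
    then show ?thesis using fin v True by simp
  next
    case False
    have na: "\<not> adj E v v" using sg_adj[OF sg] by blast
    have "(\<Sum>u\<in>V. gmat V E j v u * y u) =
          (\<Sum>u\<in>V. (if u = v then real (card {w \<in> V. adj E v w}) * y u else 0)) - (\<Sum>u\<in>V. if adj E v u then y u else 0)"
      unfolding sum_subtractf[symmetric] by (rule sum.cong) (auto simp: gmat_def False algebra_simps)
    also have "\<dots> = real (card {w \<in> V. adj E v w}) * y v - (\<Sum>u\<in>V. if adj E v u then y u else 0)"
      using fin v by simp
    also have "\<dots> = lap V E y v"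
      unfolding lap_def using fin
      by (simp add: sum_subtractf sum.inter_filter)
    finally show ?thesis using False by simp
  qed
qed

lemma exists_pot:
  assumes cg: "connected_graph V E" and i: "i \<in> V" and j: "j \<in> V"
  shows "\<exists>x. unit_current_potential V E i j x"
proof -
  have sg: "simple_graph V E" using cg cg_sg by blast
  have fin: "finite V" using sg sg_finite by blast
  define n where "n = card V"
  obtain g where g: "bij_betw g {0..<n} V" using ex_bij_betw_nat_finite[OF fin] n_def by blast
  define h where "h = the_inv_into {0..<n} g"
  have inj: "inj_on g {0..<n}" using bij_betw_imp_inj_on[OF g] .
  have img: "g ` {0..<n} = V" using bij_betw_imp_surj_on[OF g] .
  have hg: "h (g k) = k" if "k < n" for k unfolding h_def using the_inv_into_f_f[OF inj] that by simp
  have gh: "g (h u) = u" if "u \<in> V" for u unfolding h_def using f_the_inv_into_f[OF inj] that img by simp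
  have hn: "h u < n" if "u \<in> V" for u unfolding h_def using the_inv_into_into[OF inj] that img
    by (metis atLeastLessThan_iff order_refl)
  have gV: "g k \<in> V" if "k < n" for k using img that by auto
  define A where "A = mat n n (\<lambda>(a,k). gmat V E j (g a) (g k))"
  have Acar: "A \<in> carrier_mat n n" unfolding A_def by simp
  have key: "(A *\<^sub>v x) $ a = (if g a = j then x $ h j else lap V E (\<lambda>u. x $ h u) (g a))"
    if x: "x \<in> carrier_vec n" and a: "a < n" for x a
  proof -
    have "(A *\<^sub>v x) $ a = (\<Sum>k\<in>{0..<n}. gmat V E j (g a) (g k) * x $ k)"
      unfolding A_def by (rule mat_apply[OF x a])
    also have "\<dots> = (\<Sum>k\<in>{0..<n}. gmat V E j (g a) (g k) * x $ h (g k))"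
      by (rule sum.cong) (auto simp: hg)
    also have "\<dots> = (\<Sum>u\<in>V. gmat V E j (g a) u * x $ h u)"
      by (rule sum.reindex_bij_betw[OF g])
    also have "\<dots> = (if g a = j then x $ h j else lap V E (\<lambda>u. x $ h u) (g a))"
      by (rule gmat_sum[OF sg gV[OF a]])
    finally show ?thesis .
  qed
  have detA: "det A \<noteq> 0"
  proof
    assume "det A = 0"
    then obtain v where v: "v \<in> carrier_vec n" "v \<noteq> 0\<^sub>v n" "A *\<^sub>v v = 0\<^sub>v n"
      using det_0_iff_vec_prod_zero[OF Acar] by blast
    define y where "y = (\<lambda>u. v $ h u)"
    have eqs: "(if u = j then y j else lap V E y u) = 0" if u: "u \<in> V" for u
    proof -
      have "(A *\<^sub>v v) $ (h u) = 0" using v(3) hn[OF u] by simp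
      thus ?thesis using key[OF v(1) hn[OF u], unfolded gh[OF u]] unfolding y_def by simp
    qed
    have "\<forall>u\<in>V. y u = 0"
    proof (rule grounded_unique[OF cg j])
      show "\<forall>v\<in>V - {j}. lap V E y v = 0" using eqs by (metis DiffE singletonI)
      show "y j = 0" using eqs[OF j] by simp
    qed
    hence "v = 0\<^sub>v n"
      using v(1) gV hg unfolding y_def by (intro eq_vecI) (auto, metis)
    thus False using v(2) by simp
  qed
  have "A \<in> Units (ring_mat TYPE(real) n ())" by (rule det_non_zero_imp_unit[OF Acar detA])
  then obtain B where B: "B \<in> carrier_mat n n" "A * B = 1\<^sub>m n"
    unfolding Units_def ring_mat_def by auto
  define b where "b = vec n (\<lambda>a. if g a = j then 0 else if g a = i then 1 else (0::real))"
  have bcar: "b \<in> carrier_vec n" unfolding b_def by simp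
  define x where "x = B *\<^sub>v b"
  have xcar: "x \<in> carrier_vec n" unfolding x_def using B(1) bcar by simp
  have Ax: "A *\<^sub>v x = b" unfolding x_def
    using assoc_mult_mat_vec[OF Acar B(1) bcar, symmetric] B(2) bcar by simp
  define y where "y = (\<lambda>u. x $ h u)"
  have off: "lap V E y u = (if u = i then 1 else 0)" if u: "u \<in> V" "u \<noteq> j" for u
  proof -
    have "(A *\<^sub>v x) $ (h u) = b $ (h u)" using Ax by simp
    thus ?thesis using key[OF xcar hn[OF u(1)], unfolded gh[OF u(1)]] gh[OF u(1)] u hn[OF u(1)] unfolding y_def b_def by simp
  qed
  have "(\<Sum>v\<in>V. lap V E y v) = 0" by (rule lap_sum_zero[OF sg])
  moreover have "(\<Sum>v\<in>V. lap V E y v) = lap V E y j + (\<Sum>v\<in>V-{j}. lap V E y v)"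
    using fin j by (simp add: sum.remove)
  moreover have "(\<Sum>v\<in>V-{j}. lap V E y v) = (\<Sum>v\<in>V-{j}. if v = i then 1 else 0)"
    by (rule sum.cong) (auto simp: off)
  moreover have "(\<Sum>v\<in>V-{j}. if v = i then 1 else 0) = (if i = j then 0 else (1::real))"
    using fin i by simp
  ultimately have atj: "lap V E y j = (if j = i then 1 else 0) - 1" by auto
  have "unit_current_potential V E i j y"
    unfolding ucp_lap using off atj by auto
  thus ?thesis by blast
qed



definition pot :: "'a set \<Rightarrow> 'a set set \<Rightarrow> 'a \<Rightarrow> 'a \<Rightarrow> 'a \<Rightarrow> real" where
  "pot V E p q = (SOME x. unit_current_potential V E p q x)"

lemma pot_ok: "connected_graph V E \<Longrightarrow> p \<in> V \<Longrightarrow> q \<in> V \<Longrightarrow> unit_current_potential V E p q (pot V E p q)"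
  unfolding pot_def using exists_pot by (metis someI_ex)

lemma ucp_comb:
  "unit_current_potential V E p t x \<Longrightarrow> unit_current_potential V E s t y \<Longrightarrow>
   unit_current_potential V E p s (\<lambda>v. x v - y v)"
  unfolding ucp_lap lap_diff by auto

lemma ucp_unique:
  assumes cg: "connected_graph V E" and "unit_current_potential V E p q x" "unit_current_potential V E p q y"
    and s: "s \<in> V" and t: "t \<in> V"
  shows "x s - x t = y s - y t"
proof -
  have "\<forall>v\<in>V. lap V E (\<lambda>v. x v - y v) v = 0" using assms(2,3) unfolding ucp_lap lap_diff by simp
  hence "x s - y s = x t - y t" using harmonic_const[OF cg _ s t] by blast
  thus ?thesis by simp
qed

lemma reciprocity:
  assumes cg: "connected_graph V E" and x: "unit_current_potential V E p q x"
    and y: "unit_current_potential V E s t y" and V: "p \<in> V" "q \<in> V" "s \<in> V" "t \<in> V"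
  shows "x s - x t = y p - y q"
proof -
  have sg: "simple_graph V E" using cg cg_sg by blast
  have fin: "finite V" using sg sg_finite by blast
  have "(\<Sum>v\<in>V. y v * lap V E x v) = (\<Sum>v\<in>V. x v * lap V E y v)" by (rule lap_symm[OF sg])
  moreover have "(\<Sum>v\<in>V. y v * lap V E x v) = (\<Sum>v\<in>V. (if v = p then y v else 0) - (if v = q then y v else 0))"
    using x unfolding ucp_lap by (intro sum.cong) auto
  moreover have "(\<Sum>v\<in>V. x v * lap V E y v) = (\<Sum>v\<in>V. (if v = s then x v else 0) - (if v = t then x v else 0))"
    using y unfolding ucp_lap by (intro sum.cong) auto
  ultimately show ?thesis using fin V by (simp add: sum_subtractf)
qed

abbreviation res where "res V E \<equiv> resistance V E"

lemma res_self: "connected_graph V E \<Longrightarrow> p \<in> V \<Longrightarrow> resistance V E p p = 0"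
  using resistance_eq[of V E p p "\<lambda>_. 0"] unfolding ucp_lap lap_def by simp

lemma three_point:
  assumes cg: "connected_graph V E" and x: "unit_current_potential V E p t x"
    and V: "p \<in> V" "s \<in> V" "t \<in> V"
  shows "x s - x t = (resistance V E p t + resistance V E s t - resistance V E p s) / 2"
proof -
  define y where "y = pot V E s t"
  have y: "unit_current_potential V E s t y" unfolding y_def by (rule pot_ok[OF cg V(2,3)])
  have X: "x s - x t = y p - y t" using reciprocity[OF cg x y V(1,3,2,3)] .
  have 1: "resistance V E p s = (x p - y p) - (x s - y s)"
    using resistance_eq[OF cg V(1,2) ucp_comb[OF x y]] .
  have 2: "resistance V E p t = x p - x t" using resistance_eq[OF cg V(1,3) x] .
  have 3: "resistance V E s t = y s - y t" using resistance_eq[OF cg V(2,3) y] .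
  show ?thesis using X 1 2 3 by (simp add: field_simps)
qed

lemma four_point:
  assumes cg: "connected_graph V E" and x: "unit_current_potential V E p q x"
    and V: "p \<in> V" "q \<in> V" "s \<in> V" "t \<in> V"
  shows "x s - x t = (resistance V E p t + resistance V E q s - resistance V E p s - resistance V E q t) / 2"
proof -
  define a where "a = pot V E p t"
  define b where "b = pot V E q t"
  have a: "unit_current_potential V E p t a" unfolding a_def by (rule pot_ok[OF cg V(1,4)])
  have b: "unit_current_potential V E q t b" unfolding b_def by (rule pot_ok[OF cg V(2,4)])
  have "x s - x t = (a s - b s) - (a t - b t)"
    using ucp_unique[OF cg x ucp_comb[OF a b] V(3,4)] .
  moreover have "a s - a t = (resistance V E p t + resistance V E s t - resistance V E p s) / 2"
    by (rule three_point[OF cg a V(1,3,4)])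
  moreover have "b s - b t = (resistance V E q t + resistance V E s t - resistance V E q s) / 2"
    by (rule three_point[OF cg b V(2,3,4)])
  ultimately show ?thesis by (simp add: field_simps)
qed

lemma foster:
  assumes cg: "connected_graph V E"
  shows "(\<Sum>p\<in>V. \<Sum>t\<in>V. if adj E p t then resistance V E p t else 0) = 2 * (real (card V) - 1)"
proof -
  have sg: "simple_graph V E" using cg cg_sg by blast
  have fin: "finite V" using sg sg_finite by blast
  obtain j0 where j0: "j0 \<in> V" using cg unfolding connected_graph_def by blast
  define psi where "psi = (\<lambda>v. pot V E v j0)"
  have psi: "unit_current_potential V E v j0 (psi v)" if "v \<in> V" for v
    unfolding psi_def by (rule pot_ok[OF cg that j0])
  have r: "resistance V E p t = (psi p p - psi p t) + (psi t t - psi t p)" if "p \<in> V" "t \<in> V" for p t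
    using resistance_eq[OF cg that ucp_comb[OF psi[OF that(1)] psi[OF that(2)]]] by simp
  have "(\<Sum>p\<in>V. \<Sum>t\<in>V. if adj E p t then resistance V E p t else 0) =
        (\<Sum>p\<in>V. \<Sum>t\<in>V. if adj E p t then psi p p - psi p t else 0) +
        (\<Sum>p\<in>V. \<Sum>t\<in>V. if adj E p t then psi t t - psi t p else 0)"
    unfolding sum.distrib[symmetric] by (intro sum.cong refl) (auto simp: r)
  also have "(\<Sum>p\<in>V. \<Sum>t\<in>V. if adj E p t then psi t t - psi t p else 0) =
      (\<Sum>p\<in>V. \<Sum>t\<in>V. if adj E p t then psi p p - psi p t else 0)"
    by (rule double_antisym[OF fin adj_sym])
  also have "(\<Sum>p\<in>V. \<Sum>t\<in>V. if adj E p t then psi p p - psi p t else 0) = (\<Sum>p\<in>V. lap V E (psi p) p)"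
    unfolding lap_if[OF fin] ..
  also have "\<dots> = (\<Sum>p\<in>V. 1 - (if p = j0 then 1 else 0))"
    by (intro sum.cong refl) (use psi in \<open>auto simp: ucp_lap\<close>)
  also have "\<dots> = real (card V) - 1" using fin j0 by (simp add: sum_subtractf)
  finally show ?thesis by simp
qed



lemma sg_edge: "simple_graph V E \<Longrightarrow> e \<in> E \<Longrightarrow> \<exists>a b. a \<in> V \<and> b \<in> V \<and> a \<noteq> b \<and> e = {a, b}"
  unfolding simple_graph_def by blast

lemma adjT_ll: "adj (tri_edges E) (Inl u) (Inl v) \<longleftrightarrow> adj E u v"
proof
  assume "adj (tri_edges E) (Inl u) (Inl v)"
  hence m: "{Inl u, Inl v} \<in> tri_edges E" unfolding adj_def .
  then obtain e where e: "e \<in> E" "{Inl u, Inl v} = (Inl ` e :: ('a + 'a set) set)"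
    unfolding tri_edges_def by (auto simp: doubleton_eq_iff)
  have "(Inl ` e :: ('a + 'a set) set) = Inl ` {u, v}" using e(2)[symmetric] by simp
  hence "e = {u, v}" using inj_image_eq_iff[of Inl] by (metis inj_Inl)
  thus "adj E u v" unfolding adj_def using e by simp
next
  assume "adj E u v"
  hence "{u, v} \<in> E" unfolding adj_def .
  hence "(Inl ` {u, v} :: ('a + 'a set) set) \<in> (\<lambda>e. Inl ` e) ` E" by blast
  thus "adj (tri_edges E) (Inl u) (Inl v)" unfolding adj_def tri_edges_def by simp
qed

lemma adjT_lr: "adj (tri_edges E) (Inl u) (Inr e) \<longleftrightarrow> e \<in> E \<and> u \<in> e"
proof
  assume "adj (tri_edges E) (Inl u) (Inr e)"
  hence "{Inl u, Inr e} \<in> {{Inl u, Inr e} | u e. e \<in> E \<and> u \<in> e}"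
    unfolding adj_def tri_edges_def by auto
  thus "e \<in> E \<and> u \<in> e" by (auto simp: doubleton_eq_iff)
next
  assume "e \<in> E \<and> u \<in> e"
  thus "adj (tri_edges E) (Inl u) (Inr e)" unfolding adj_def tri_edges_def by blast
qed

lemma adjT_rl: "adj (tri_edges E) (Inr e) (Inl u) \<longleftrightarrow> e \<in> E \<and> u \<in> e"
  using adjT_lr adj_sym by metis

lemma adjT_rr: "\<not> adj (tri_edges E) (Inr e) (Inr f)"
  unfolding adj_def tri_edges_def by (auto simp: doubleton_eq_iff)

lemma tri_sg:
  assumes sg: "simple_graph V E"
  shows "simple_graph (tri_vertices V E) (tri_edges E)"
  unfolding simple_graph_def
proof (intro conjI ballI)
  show "finite (tri_vertices V E)" unfolding tri_vertices_def using sg_finite[OF sg] sg_finite_E[OF sg] by simp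
next
  fix x assume x: "x \<in> tri_edges E"
  show "\<exists>u v. u \<in> tri_vertices V E \<and> v \<in> tri_vertices V E \<and> u \<noteq> v \<and> x = {u, v}"
  proof (cases "x \<in> (\<lambda>e. Inl ` e) ` E")
    case True
    then obtain e where e: "e \<in> E" "x = Inl ` e" by auto
    obtain a b where ab: "a \<in> V" "b \<in> V" "a \<noteq> b" "e = {a, b}" using sg_edge[OF sg e(1)] by blast
    show ?thesis unfolding tri_vertices_def
      by (intro exI[of _ "Inl a"] exI[of _ "Inl b"] conjI) (simp_all add: e(2) ab)
  next
    case False
    have "x \<in> {{Inl u, Inr e} | u e. e \<in> E \<and> u \<in> e}" using x False unfolding tri_edges_def by simp
    hence "\<exists>u e. x = {Inl u, Inr e} \<and> e \<in> E \<and> u \<in> e" by (simp only: mem_Collect_eq)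
    then obtain u e where ue0: "x = {Inl u, Inr e} \<and> e \<in> E \<and> u \<in> e" by iprover
    hence ue: "e \<in> E" "u \<in> e" "x = {Inl u, Inr e}" by simp_all
    obtain a b where ab: "a \<in> V" "b \<in> V" "a \<noteq> b" "e = {a, b}" using sg_edge[OF sg ue(1)] by blast
    have "u \<in> V" using ab ue by auto
    thus ?thesis unfolding tri_vertices_def
      by (intro exI[of _ "Inl u"] exI[of _ "Inr e"] conjI) (simp_all add: ue(1,3))
  qed
qed

lemma tri_cg:
  assumes cg: "connected_graph V E"
  shows "connected_graph (tri_vertices V E) (tri_edges E)"
proof -
  have sg: "simple_graph V E" using cg cg_sg by blast
  let ?A = "adj (tri_edges E)"
  have lift: "?A\<^sup>*\<^sup>* (Inl u) (Inl v)" if "(adj E)\<^sup>*\<^sup>* u v" for u v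
    using that
  proof (induction rule: rtranclp_induct)
    case base then show ?case by simp
  next
    case (step b c)
    then show ?case using adjT_ll by (metis rtranclp.rtrancl_into_rtrancl)
  qed
  have toV: "\<exists>v\<in>V. ?A\<^sup>*\<^sup>* x (Inl v) \<and> ?A\<^sup>*\<^sup>* (Inl v) x" if x: "x \<in> tri_vertices V E" for x
  proof (cases x)
    case (Inl v)
    then show ?thesis using x unfolding tri_vertices_def by auto
  next
    case (Inr e)
    hence e: "e \<in> E" using x unfolding tri_vertices_def by auto
    obtain a b where ab: "a \<in> V" "b \<in> V" "a \<noteq> b" "e = {a, b}" using sg_edge[OF sg e] by blast
    have "?A (Inr e) (Inl a)" using adjT_rl[of E e a] e ab(4) by simp
    moreover have "?A (Inl a) (Inr e)" using adjT_lr[of E a e] e ab(4) by simp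
    ultimately have "?A x (Inl a)" "?A (Inl a) x" using Inr by simp_all
    thus ?thesis using ab(1) by blast
  qed
  show ?thesis unfolding connected_graph_def
  proof (intro conjI ballI)
    show "simple_graph (tri_vertices V E) (tri_edges E)" by (rule tri_sg[OF sg])
    show "tri_vertices V E \<noteq> {}" using cg unfolding connected_graph_def tri_vertices_def by auto
  next
    fix x y assume x: "x \<in> tri_vertices V E" and y: "y \<in> tri_vertices V E"
    obtain u where u: "u \<in> V" "?A\<^sup>*\<^sup>* x (Inl u)" using toV[OF x] by blast
    obtain v where v: "v \<in> V" "?A\<^sup>*\<^sup>* (Inl v) y" using toV[OF y] by blast
    have "(adj E)\<^sup>*\<^sup>* u v" using cg u v unfolding connected_graph_def by blast
    hence "?A\<^sup>*\<^sup>* (Inl u) (Inl v)" by (rule lift)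
    thus "?A\<^sup>*\<^sup>* x y" using u v by (meson rtranclp_trans)
  qed
qed

lemma nbrT_l:
  assumes sg: "simple_graph V E" and v: "v \<in> V"
  shows "{g \<in> tri_vertices V E. adj (tri_edges E) (Inl v) g} = Inl ` {u \<in> V. adj E v u} \<union> Inr ` {e \<in> E. v \<in> e}"
  unfolding tri_vertices_def by (auto simp: adjT_ll adjT_lr)

lemma nbrT_r:
  assumes sg: "simple_graph V E" and e: "e \<in> E"
  shows "{g \<in> tri_vertices V E. adj (tri_edges E) (Inr e) g} = Inl ` e"
proof -
  have "e \<subseteq> V" using sg_edge[OF sg e] by auto
  thus ?thesis unfolding tri_vertices_def using e by (auto simp: adjT_rl adjT_rr)
qed

lemma edge_bij:
  assumes sg: "simple_graph V E" and v: "v \<in> V"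
  shows "bij_betw (\<lambda>u. {v, u}) {u \<in> V. adj E v u} {e \<in> E. v \<in> e}"
  unfolding bij_betw_def
proof
  show "inj_on (\<lambda>u. {v, u}) {u \<in> V. adj E v u}" by (auto simp: inj_on_def doubleton_eq_iff)
  show "(\<lambda>u. {v, u}) ` {u \<in> V. adj E v u} = {e \<in> E. v \<in> e}"
  proof
    show "(\<lambda>u. {v, u}) ` {u \<in> V. adj E v u} \<subseteq> {e \<in> E. v \<in> e}" by (auto simp: adj_def)
    show "{e \<in> E. v \<in> e} \<subseteq> (\<lambda>u. {v, u}) ` {u \<in> V. adj E v u}"
    proof
      fix e assume "e \<in> {e \<in> E. v \<in> e}"
      hence e: "e \<in> E" "v \<in> e" by auto
      obtain a b where ab: "a \<in> V" "b \<in> V" "a \<noteq> b" "e = {a, b}" using sg_edge[OF sg e(1)] by blast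
      show "e \<in> (\<lambda>u. {v, u}) ` {u \<in> V. adj E v u}"
      proof (cases "v = a")
        case True
        thus ?thesis using ab e by (intro image_eqI[of _ _ b]) (auto simp: adj_def)
      next
        case False
        hence "v = b" using e ab by auto
        thus ?thesis using ab e by (intro image_eqI[of _ _ a]) (auto simp: adj_def insert_commute)
      qed
    qed
  qed
qed

lemma card_inc: assumes "simple_graph V E" "v \<in> V" shows "card {e \<in> E. v \<in> e} = Defs.degree V E v"
  unfolding Defs.degree_def using bij_betw_same_card[OF edge_bij[OF assms]] by simp



definition wt :: "('a + 'a set) \<Rightarrow> 'a \<Rightarrow> real" where
  "wt g p = (case g of Inl v \<Rightarrow> if p = v then 1 else 0 | Inr e \<Rightarrow> if p \<in> e then 1/2 else 0)"

definition cc :: "('a + 'a set) \<Rightarrow> real" where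
  "cc g = (case g of Inl v \<Rightarrow> 0 | Inr e \<Rightarrow> 1/2)"

definition hh :: "('a + 'a set) \<Rightarrow> ('a + 'a set) \<Rightarrow> real" where
  "hh a g = (if g = a then cc a else 0)"

definition liftf :: "'a set \<Rightarrow> ('a \<Rightarrow> real) \<Rightarrow> ('a + 'a set) \<Rightarrow> real" where
  "liftf V f g = 2/3 * (\<Sum>s\<in>V. wt g s * f s)"

lemma wt_l[simp]: "wt (Inl v) p = (if p = v then 1 else 0)" unfolding wt_def by simp
lemma wt_r[simp]: "wt (Inr e) p = (if p \<in> e then 1/2 else 0)" unfolding wt_def by simp
lemma cc_l[simp]: "cc (Inl v) = 0" unfolding cc_def by simp
lemma cc_r[simp]: "cc (Inr e) = 1/2" unfolding cc_def by simp
lemma hh_l: "hh (Inl w) = (\<lambda>_. 0)" unfolding hh_def by auto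

lemma sum_half_edge:
  fixes f :: "'a \<Rightarrow> real"
  assumes "finite V" "a \<in> V" "b \<in> V" "a \<noteq> b"
  shows "(\<Sum>s\<in>V. (if s \<in> {a, b} then 1/2 else 0) * f s) = (f a + f b) / 2"
proof -
  have "(\<Sum>s\<in>V. (if s \<in> {a, b} then 1/2 else 0) * f s) = (\<Sum>s\<in>V. (if s = a then f s / 2 else 0) + (if s = b then f s / 2 else 0))"
    by (rule sum.cong) (use assms in auto)
  also have "\<dots> = (f a + f b) / 2" using assms by (simp add: sum.distrib)
  finally show ?thesis .
qed

lemma sum_wt:
  assumes sg: "simple_graph V E" and g: "g \<in> tri_vertices V E"
  shows "(\<Sum>p\<in>V. wt g p) = 1"
proof (cases g)
  case (Inl v)
  then show ?thesis using g sg_finite[OF sg] unfolding tri_vertices_def by auto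
next
  case (Inr e)
  hence e: "e \<in> E" using g unfolding tri_vertices_def by auto
  obtain a b where ab: "a \<in> V" "b \<in> V" "a \<noteq> b" "e = {a, b}" using sg_edge[OF sg e] by blast
  have "(\<Sum>p\<in>V. wt g p) = (\<Sum>p\<in>V. (if p \<in> {a, b} then 1/2 else 0) * (\<lambda>_. 1::real) p)"
    by (rule sum.cong) (auto simp: Inr ab(4))
  also have "\<dots> = ((\<lambda>_. 1::real) a + (\<lambda>_. 1::real) b) / 2" by (rule sum_half_edge[OF sg_finite[OF sg] ab(1-3)])
  finally show ?thesis by simp
qed

lemma lift_l: assumes "v \<in> V" "finite V" shows "liftf V f (Inl v) = 2/3 * f v"
proof -
  have "(\<Sum>s\<in>V. wt (Inl v) s * f s) = (\<Sum>s\<in>V. if s = v then f s else 0)"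
    by (rule sum.cong) auto
  thus ?thesis unfolding liftf_def using assms by simp
qed

lemma lift_r: "finite V \<Longrightarrow> a \<in> V \<Longrightarrow> b \<in> V \<Longrightarrow> a \<noteq> b \<Longrightarrow> liftf V f (Inr {a, b}) = (f a + f b) / 3"
  unfolding liftf_def wt_r using sum_half_edge[of V a b f] by simp

lemma lapT_lift_l:
  assumes sg: "simple_graph V E" and v: "v \<in> V"
  shows "lap (tri_vertices V E) (tri_edges E) (liftf V f) (Inl v) = lap V E f v"
proof -
  have fin: "finite V" using sg sg_finite by blast
  have finE: "finite E" using sg sg_finite_E by blast
  let ?F = "liftf V f"
  let ?N = "{u \<in> V. adj E v u}"
  let ?Ev = "{e \<in> E. v \<in> e}"
  have "lap (tri_vertices V E) (tri_edges E) ?F (Inl v) = (\<Sum>g\<in>Inl ` ?N \<union> Inr ` ?Ev. ?F (Inl v) - ?F g)"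
    unfolding lap_def nbrT_l[OF sg v] ..
  also have "\<dots> = (\<Sum>g\<in>Inl ` ?N. ?F (Inl v) - ?F g) + (\<Sum>g\<in>Inr ` ?Ev. ?F (Inl v) - ?F g)"
    by (rule sum.union_disjoint) (use fin finE in auto)
  also have "(\<Sum>g\<in>Inl ` ?N. ?F (Inl v) - ?F g) = (\<Sum>u\<in>?N. ?F (Inl v) - ?F (Inl u))"
    by (rule sum.reindex_cong[of Inl]) (auto simp: inj_on_def)
  also have "(\<Sum>g\<in>Inr ` ?Ev. ?F (Inl v) - ?F g) = (\<Sum>e\<in>?Ev. ?F (Inl v) - ?F (Inr e))"
    by (rule sum.reindex_cong[of Inr]) (auto simp: inj_on_def)
  also have "\<dots> = (\<Sum>u\<in>?N. ?F (Inl v) - ?F (Inr {v, u}))"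
    by (rule sum.reindex_bij_betw[OF edge_bij[OF sg v], symmetric])
  also have "(\<Sum>u\<in>?N. ?F (Inl v) - ?F (Inl u)) + (\<Sum>u\<in>?N. ?F (Inl v) - ?F (Inr {v, u})) = (\<Sum>u\<in>?N. f v - f u)"
    unfolding sum.distrib[symmetric]
  proof (rule sum.cong[OF refl])
    fix u assume u: "u \<in> ?N"
    have uV: "u \<in> V" "u \<noteq> v" using u sg_adj[OF sg] by auto
    have l1: "?F (Inl v) = 2/3 * f v" by (rule lift_l[OF v fin])
    have l2: "?F (Inl u) = 2/3 * f u" by (rule lift_l[OF uV(1) fin])
    have l3: "?F (Inr {v, u}) = (f v + f u) / 3" by (rule lift_r[OF fin v uV(1)]) (use uV in auto)
    show "?F (Inl v) - ?F (Inl u) + (?F (Inl v) - ?F (Inr {v, u})) = f v - f u"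
      unfolding l1 l2 l3 by (simp add: field_simps)
  qed
  finally show ?thesis unfolding lap_def .
qed

lemma lapT_lift_r:
  assumes sg: "simple_graph V E" and e: "e \<in> E"
  shows "lap (tri_vertices V E) (tri_edges E) (liftf V f) (Inr e) = 0"
proof -
  have fin: "finite V" using sg sg_finite by blast
  obtain a b where ab: "a \<in> V" "b \<in> V" "a \<noteq> b" "e = {a, b}" using sg_edge[OF sg e] by blast
  let ?F = "liftf V f"
  have "lap (tri_vertices V E) (tri_edges E) ?F (Inr e) = (\<Sum>g\<in>{Inl a, Inl b}. ?F (Inr e) - ?F g)"
    unfolding lap_def nbrT_r[OF sg e] using ab(4) by simp
  also have "\<dots> = (?F (Inr e) - ?F (Inl a)) + (?F (Inr e) - ?F (Inl b))" using ab(3) by simp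
  also have "\<dots> = 0"
  proof -
    have l3: "?F (Inr e) = (f a + f b) / 3" using lift_r[OF fin ab(1-3)] ab(4) by simp
    have l1: "?F (Inl a) = 2/3 * f a" by (rule lift_l[OF ab(1) fin])
    have l2: "?F (Inl b) = 2/3 * f b" by (rule lift_l[OF ab(2) fin])
    show ?thesis unfolding l1 l2 l3 by (simp add: field_simps)
  qed
  finally show ?thesis .
qed

lemma lapT_hh_l:
  assumes sg: "simple_graph V E" and a: "a \<in> tri_vertices V E" and v: "v \<in> V"
  shows "lap (tri_vertices V E) (tri_edges E) (hh a) (Inl v) = (if Inl v = a then 1 else 0) - wt a v"
proof (cases a)
  case (Inl w)
  then show ?thesis unfolding Inl hh_l lap_def by simp
next
  case (Inr e0)
  hence e0: "e0 \<in> E" using a unfolding tri_vertices_def by auto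
  have fin: "finite (tri_vertices V E)" using tri_sg[OF sg] sg_finite by blast
  let ?S = "{g \<in> tri_vertices V E. adj (tri_edges E) (Inl v) g}"
  have "lap (tri_vertices V E) (tri_edges E) (hh a) (Inl v) = (\<Sum>g\<in>?S. - (if g = Inr e0 then 1/2 else 0))"
    unfolding lap_def hh_def Inr by (rule sum.cong) auto
  also have "\<dots> = - (if Inr e0 \<in> ?S then 1/2 else 0)"
    using fin by (simp add: sum_negf)
  also have "\<dots> = - (if v \<in> e0 then 1/2 else 0)"
    using a Inr e0 by (simp add: adjT_lr)
  finally show ?thesis using Inr by simp
qed

lemma lapT_hh_r:
  assumes sg: "simple_graph V E" and a: "a \<in> tri_vertices V E" and e: "e \<in> E"
  shows "lap (tri_vertices V E) (tri_edges E) (hh a) (Inr e) = (if Inr e = a then 1 else 0)"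
proof -
  obtain x y where xy: "x \<in> V" "y \<in> V" "x \<noteq> y" "e = {x, y}" using sg_edge[OF sg e] by blast
  have "lap (tri_vertices V E) (tri_edges E) (hh a) (Inr e) = (\<Sum>g\<in>{Inl x, Inl y}. hh a (Inr e) - hh a g)"
    unfolding lap_def nbrT_r[OF sg e] using xy(4) by simp
  also have "\<dots> = 2 * hh a (Inr e)"
    using xy(3) by (cases a) (auto simp: hh_def)
  also have "\<dots> = (if Inr e = a then 1 else 0)"
    by (cases a) (auto simp: hh_def)
  finally show ?thesis .
qed



lemma sum_prod_split:
  fixes a b c d :: "'a \<Rightarrow> real"
  shows "(\<Sum>p\<in>A. \<Sum>q\<in>B. a p * b q * (c p - d q)) = (\<Sum>p\<in>A. a p * c p) * (\<Sum>q\<in>B. b q) - (\<Sum>p\<in>A. a p) * (\<Sum>q\<in>B. b q * d q)"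
  unfolding sum_product sum_subtractf[symmetric]
  by (intro sum.cong refl) (simp add: algebra_simps)

definition Fm :: "'a set \<Rightarrow> 'a set set \<Rightarrow> ('a + 'a set) \<Rightarrow> ('a + 'a set) \<Rightarrow> 'a \<Rightarrow> real" where
  "Fm V E a b s = (\<Sum>p\<in>V. \<Sum>q\<in>V. wt a p * wt b q * pot V E p q s)"

definition Xp :: "'a set \<Rightarrow> 'a set set \<Rightarrow> ('a + 'a set) \<Rightarrow> ('a + 'a set) \<Rightarrow> ('a + 'a set) \<Rightarrow> real" where
  "Xp V E a b = (\<lambda>g. liftf V (Fm V E a b) g + hh a g - hh b g)"

definition Rr :: "'a set \<Rightarrow> 'a set set \<Rightarrow> ('a + 'a set) \<Rightarrow> 'a \<Rightarrow> real" where
  "Rr V E g x = (\<Sum>p\<in>V. wt g p * resistance V E p x)"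

definition Dm :: "'a set \<Rightarrow> 'a set set \<Rightarrow> ('a + 'a set) \<Rightarrow> ('a + 'a set) \<Rightarrow> real" where
  "Dm V E g h = (\<Sum>t\<in>V. wt h t * Rr V E g t)"

lemma lapG_Fm:
  assumes cg: "connected_graph V E" and a: "a \<in> tri_vertices V E" and b: "b \<in> tri_vertices V E" and v: "v \<in> V"
  shows "lap V E (Fm V E a b) v = wt a v - wt b v"
proof -
  have sg: "simple_graph V E" using cg cg_sg by blast
  have fin: "finite V" using sg sg_finite by blast
  have "lap V E (Fm V E a b) v = (\<Sum>p\<in>V. \<Sum>q\<in>V. wt a p * wt b q * lap V E (pot V E p q) v)"
    unfolding Fm_def by (simp only: lap_sum[OF fin] lap_scale)
  also have "\<dots> = (\<Sum>p\<in>V. \<Sum>q\<in>V. wt a p * wt b q * ((if v = p then 1 else 0) - (if v = q then 1 else 0)))"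
    using pot_ok[OF cg] v unfolding ucp_lap by (intro sum.cong refl) auto
  also have "\<dots> = (\<Sum>p\<in>V. wt a p * (if v = p then 1 else 0)) * (\<Sum>q\<in>V. wt b q) - (\<Sum>p\<in>V. wt a p) * (\<Sum>q\<in>V. wt b q * (if v = q then 1 else 0))"
    by (rule sum_prod_split)
  also have "\<dots> = wt a v - wt b v"
    using sum_wt[OF sg a] sum_wt[OF sg b] fin v by (simp add: if_distrib cong: if_cong)
  finally show ?thesis .
qed

lemma Xp_ucp:
  assumes cg: "connected_graph V E" and a: "a \<in> tri_vertices V E" and b: "b \<in> tri_vertices V E"
  shows "unit_current_potential (tri_vertices V E) (tri_edges E) a b (Xp V E a b)"
  unfolding ucp_lap
proof
  have sg: "simple_graph V E" using cg cg_sg by blast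
  fix g assume g: "g \<in> tri_vertices V E"
  have "lap (tri_vertices V E) (tri_edges E) (Xp V E a b) g =
    lap (tri_vertices V E) (tri_edges E) (liftf V (Fm V E a b)) g + lap (tri_vertices V E) (tri_edges E) (hh a) g
     - lap (tri_vertices V E) (tri_edges E) (hh b) g"
    unfolding Xp_def lap_diff lap_add ..
  also have "\<dots> = (if g = a then 1 else 0) - (if g = b then 1 else 0)"
  proof (cases g)
    case (Inl v)
    hence v: "v \<in> V" using g unfolding tri_vertices_def by auto
    show ?thesis unfolding Inl lapT_lift_l[OF sg v] lapG_Fm[OF cg a b v] lapT_hh_l[OF sg a v] lapT_hh_l[OF sg b v]
      by simp
  next
    case (Inr e)
    hence e: "e \<in> E" using g unfolding tri_vertices_def by auto
    show ?thesis unfolding Inr lapT_lift_r[OF sg e] lapT_hh_r[OF sg a e] lapT_hh_r[OF sg b e]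
      by simp
  qed
  finally show "lap (tri_vertices V E) (tri_edges E) (Xp V E a b) g = (if g = a then 1 else 0) - (if g = b then 1 else 0)" .
qed

lemma Fm_diff:
  assumes cg: "connected_graph V E" and a: "a \<in> tri_vertices V E" and b: "b \<in> tri_vertices V E"
    and s: "s \<in> V" and t: "t \<in> V"
  shows "Fm V E a b s - Fm V E a b t = (Rr V E b s - Rr V E a s) / 2 - (Rr V E b t - Rr V E a t) / 2"
proof -
  have sg: "simple_graph V E" using cg cg_sg by blast
  let ?r = "resistance V E"
  have "Fm V E a b s - Fm V E a b t = (\<Sum>p\<in>V. \<Sum>q\<in>V. wt a p * wt b q * (pot V E p q s - pot V E p q t))"
    unfolding Fm_def sum_subtractf[symmetric] by (intro sum.cong refl) (simp add: algebra_simps)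
  also have "\<dots> = (\<Sum>p\<in>V. \<Sum>q\<in>V. wt a p * wt b q * ((?r p t - ?r p s) / 2 - (?r q t - ?r q s) / 2))"
  proof (intro sum.cong refl)
    fix p q assume p: "p \<in> V" and q: "q \<in> V"
    have "pot V E p q s - pot V E p q t = (?r p t + ?r q s - ?r p s - ?r q t) / 2"
      by (rule four_point[OF cg pot_ok[OF cg p q] p q s t])
    hence h: "pot V E p q s - pot V E p q t = (?r p t - ?r p s) / 2 - (?r q t - ?r q s) / 2" by argo
    show "wt a p * wt b q * (pot V E p q s - pot V E p q t) = wt a p * wt b q * ((?r p t - ?r p s) / 2 - (?r q t - ?r q s) / 2)"
      by (simp only: h)
  qed
  also have "\<dots> = (\<Sum>p\<in>V. wt a p * ((?r p t - ?r p s) / 2)) * (\<Sum>q\<in>V. wt b q) - (\<Sum>p\<in>V. wt a p) * (\<Sum>q\<in>V. wt b q * ((?r q t - ?r q s) / 2))"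
    by (rule sum_prod_split)
  also have "\<dots> = (\<Sum>p\<in>V. wt a p * ((?r p t - ?r p s) / 2)) - (\<Sum>q\<in>V. wt b q * ((?r q t - ?r q s) / 2))"
    using sum_wt[OF sg a] sum_wt[OF sg b] by simp
  also have "\<dots> = (Rr V E b s - Rr V E a s) / 2 - (Rr V E b t - Rr V E a t) / 2"
    unfolding Rr_def by (simp add: sum_subtractf[symmetric] sum_divide_distrib[symmetric] field_simps)
  finally show ?thesis .
qed

lemma resT:
  assumes cg: "connected_graph V E" and a: "a \<in> tri_vertices V E" and b: "b \<in> tri_vertices V E" and ab: "a \<noteq> b"
  shows "resistance (tri_vertices V E) (tri_edges E) a b = cc a + cc b + (Dm V E a b + Dm V E b a - Dm V E a a - Dm V E b b) / 3"
proof -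
  have sg: "simple_graph V E" using cg cg_sg by blast
  let ?F = "Fm V E a b"
  have "resistance (tri_vertices V E) (tri_edges E) a b = Xp V E a b a - Xp V E a b b"
    by (rule resistance_eq[OF tri_cg[OF cg] a b Xp_ucp[OF cg a b]])
  also have "\<dots> = liftf V ?F a - liftf V ?F b + cc a + cc b"
    unfolding Xp_def hh_def using ab by simp
  also have "liftf V ?F a - liftf V ?F b = 2/3 * ((\<Sum>s\<in>V. wt a s * ?F s) * (\<Sum>t\<in>V. wt b t) - (\<Sum>s\<in>V. wt a s) * (\<Sum>t\<in>V. wt b t * ?F t))"
    unfolding liftf_def using sum_wt[OF sg a] sum_wt[OF sg b] by (simp add: algebra_simps)
  also have "(\<Sum>s\<in>V. wt a s * ?F s) * (\<Sum>t\<in>V. wt b t) - (\<Sum>s\<in>V. wt a s) * (\<Sum>t\<in>V. wt b t * ?F t)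
     = (\<Sum>s\<in>V. \<Sum>t\<in>V. wt a s * wt b t * (?F s - ?F t))"
    by (rule sum_prod_split[symmetric])
  also have "\<dots> = (\<Sum>s\<in>V. \<Sum>t\<in>V. wt a s * wt b t * ((Rr V E b s - Rr V E a s) / 2 - (Rr V E b t - Rr V E a t) / 2))"
    by (intro sum.cong refl) (simp add: Fm_diff[OF cg a b])
  also have "\<dots> = (\<Sum>s\<in>V. wt a s * ((Rr V E b s - Rr V E a s) / 2)) * (\<Sum>t\<in>V. wt b t) - (\<Sum>s\<in>V. wt a s) * (\<Sum>t\<in>V. wt b t * ((Rr V E b t - Rr V E a t) / 2))"
    by (rule sum_prod_split)
  also have "\<dots> = (\<Sum>s\<in>V. wt a s * ((Rr V E b s - Rr V E a s) / 2)) - (\<Sum>t\<in>V. wt b t * ((Rr V E b t - Rr V E a t) / 2))"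
    using sum_wt[OF sg a] sum_wt[OF sg b] by simp
  also have "\<dots> = ((Dm V E b a - Dm V E a a) - (Dm V E b b - Dm V E a b)) / 2"
    unfolding Dm_def by (simp add: sum_subtractf[symmetric] sum_divide_distrib[symmetric] field_simps)
  finally show ?thesis by (simp add: field_simps)
qed



lemma sum_VT:
  assumes "finite V" "finite E"
  shows "(\<Sum>g\<in>tri_vertices V E. f g) = (\<Sum>v\<in>V. f (Inl v)) + (\<Sum>e\<in>E. f (Inr e))"
proof -
  have "(\<Sum>g\<in>Inl ` V \<union> Inr ` E. f g) = (\<Sum>g\<in>Inl ` V. f g) + (\<Sum>g\<in>Inr ` E. f g)"
    by (rule sum.union_disjoint) (use assms in auto)
  also have "(\<Sum>g\<in>Inl ` V. f g) = (\<Sum>v\<in>V. f (Inl v))" by (rule sum.reindex_cong[of Inl]) (auto simp: inj_on_def)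
  also have "(\<Sum>g\<in>Inr ` E. f g) = (\<Sum>e\<in>E. f (Inr e))" by (rule sum.reindex_cong[of Inr]) (auto simp: inj_on_def)
  finally show ?thesis unfolding tri_vertices_def .
qed

lemma card_VT:
  assumes "finite V" "finite E"
  shows "card (tri_vertices V E) = card V + card E"
proof -
  have "card (Inl ` V \<union> Inr ` E :: ('a + 'a set) set) = card (Inl ` V :: ('a + 'a set) set) + card (Inr ` E :: ('a + 'a set) set)"
    by (rule card_Un_disjoint) (use assms in auto)
  also have "\<dots> = card V + card E" by (simp add: card_image inj_on_def)
  finally show ?thesis unfolding tri_vertices_def .
qed

lemma sum_if_const: "finite A \<Longrightarrow> (\<Sum>x\<in>A. if P x then (c::real) else 0) = real (card {x \<in> A. P x}) * c"
  by (simp add: sum.inter_filter[symmetric])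

lemma W_eq:
  assumes sg: "simple_graph V E" and p: "p \<in> V"
  shows "(\<Sum>g\<in>tri_vertices V E. wt g p) = 1 + real (Defs.degree V E p) / 2"
proof -
  have fin: "finite V" using sg sg_finite by blast
  have finE: "finite E" using sg sg_finite_E by blast
  have "(\<Sum>g\<in>tri_vertices V E. wt g p) = (\<Sum>v\<in>V. if p = v then 1 else 0) + (\<Sum>e\<in>E. if p \<in> e then 1/2 else 0)"
    unfolding sum_VT[OF fin finE] by simp
  also have "(\<Sum>v\<in>V. if p = v then 1 else (0::real)) = 1" using fin p by simp
  also have "(\<Sum>e\<in>E. if p \<in> e then 1/2 else (0::real)) = real (card {e \<in> E. p \<in> e}) * (1/2)"
    by (rule sum_if_const[OF finE])
  finally show ?thesis using card_inc[OF sg p] by simp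
qed

lemma sum_cc:
  assumes sg: "simple_graph V E"
  shows "(\<Sum>g\<in>tri_vertices V E. cc g) = real (card E) / 2"
  using sg_finite[OF sg] sg_finite_E[OF sg] by (simp add: sum_VT)

lemma swap_left:
  fixes c :: "'b \<Rightarrow> real"
  shows "(\<Sum>x\<in>A. \<Sum>y\<in>B. c y * f x y) = (\<Sum>y\<in>B. c y * (\<Sum>x\<in>A. f x y))"
  by (subst sum.swap) (simp add: sum_distrib_left)

lemma SD_eq:
  assumes cg: "connected_graph V E"
  shows "(\<Sum>a\<in>tri_vertices V E. \<Sum>b\<in>tri_vertices V E. Dm V E a b) =
    (\<Sum>t\<in>V. (1 + real (Defs.degree V E t) / 2) * (\<Sum>p\<in>V. (1 + real (Defs.degree V E p) / 2) * resistance V E p t))"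
proof -
  have sg: "simple_graph V E" using cg cg_sg by blast
  let ?T = "tri_vertices V E"
  have "(\<Sum>a\<in>?T. \<Sum>b\<in>?T. Dm V E a b) = (\<Sum>a\<in>?T. \<Sum>t\<in>V. (\<Sum>b\<in>?T. wt b t) * Rr V E a t)"
    unfolding Dm_def by (intro sum.cong refl) (simp add: sum.swap[of _ ?T] sum_distrib_right)
  also have "\<dots> = (\<Sum>a\<in>?T. \<Sum>t\<in>V. (1 + real (Defs.degree V E t) / 2) * Rr V E a t)"
    by (intro sum.cong refl) (simp add: W_eq[OF sg])
  also have "\<dots> = (\<Sum>t\<in>V. (1 + real (Defs.degree V E t) / 2) * (\<Sum>a\<in>?T. Rr V E a t))"
    by (rule swap_left)
  also have "\<dots> = (\<Sum>t\<in>V. (1 + real (Defs.degree V E t) / 2) * (\<Sum>p\<in>V. (1 + real (Defs.degree V E p) / 2) * resistance V E p t))"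
  proof (intro sum.cong refl arg_cong[where f = "\<lambda>x. _ * x"])
    fix t
    have "(\<Sum>a\<in>?T. Rr V E a t) = (\<Sum>p\<in>V. (\<Sum>a\<in>?T. wt a p) * resistance V E p t)"
      unfolding Rr_def by (simp add: sum.swap[of _ ?T] sum_distrib_right)
    also have "\<dots> = (\<Sum>p\<in>V. (1 + real (Defs.degree V E p) / 2) * resistance V E p t)"
      by (intro sum.cong refl) (simp add: W_eq[OF sg])
    finally show "(\<Sum>a\<in>?T. Rr V E a t) = \<dots>" .
  qed
  finally show ?thesis .
qed

lemma edge_count:
  assumes sg: "simple_graph V E" and p: "p \<in> V" and t: "t \<in> V" and pt: "p \<noteq> t"
  shows "{e \<in> E. t \<in> e \<and> p \<in> e} = (if adj E p t then {{p, t}} else {})"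
proof -
  have eq: "e = {p, t}" if h: "e \<in> E" "t \<in> e" "p \<in> e" for e
  proof -
    obtain a b where ab: "a \<in> V" "b \<in> V" "a \<noteq> b" "e = {a, b}" using sg_edge[OF sg h(1)] by blast
    show ?thesis using ab h pt by auto
  qed
  show ?thesis
  proof (cases "{p, t} \<in> E")
    case True
    have "{e \<in> E. t \<in> e \<and> p \<in> e} = {{p, t}}"
    proof (intro Set.set_eqI iffI)
      fix x assume "x \<in> {e \<in> E. t \<in> e \<and> p \<in> e}"
      hence "x \<in> E" "t \<in> x" "p \<in> x" by simp_all
      hence "x = {p, t}" by (rule eq)
      thus "x \<in> {{p, t}}" by simp
    next
      fix x assume "x \<in> {{p, t}}"
      hence "x = {p, t}" by simp
      thus "x \<in> {e \<in> E. t \<in> e \<and> p \<in> e}" using True by simp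
    qed
    thus ?thesis using True unfolding adj_def by simp
  next
    case False
    have "{e \<in> E. t \<in> e \<and> p \<in> e} = {}"
    proof (rule ccontr)
      assume "{e \<in> E. t \<in> e \<and> p \<in> e} \<noteq> {}"
      then obtain x where "x \<in> E" "t \<in> x" "p \<in> x" by blast
      hence "x = {p, t}" "x \<in> E" using eq by simp_all
      thus False using False by simp
    qed
    thus ?thesis using False unfolding adj_def by simp
  qed
qed

lemma DD_eq:
  assumes cg: "connected_graph V E"
  shows "(\<Sum>g\<in>tri_vertices V E. Dm V E g g) = (real (card V) - 1) / 2"
proof -
  have sg: "simple_graph V E" using cg cg_sg by blast
  have fin: "finite V" using sg sg_finite by blast
  have finE: "finite E" using sg sg_finite_E by blast
  let ?r = "resistance V E"
  have l: "Dm V E (Inl v) (Inl v) = 0" if v: "v \<in> V" for v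
  proof -
    have "Rr V E (Inl v) t = ?r v t" if "t \<in> V" for t
    proof -
      have "Rr V E (Inl v) t = (\<Sum>p\<in>V. if p = v then ?r p t else 0)" unfolding Rr_def by (intro sum.cong refl) auto
      thus ?thesis using v fin by simp
    qed
    hence "Dm V E (Inl v) (Inl v) = (\<Sum>t\<in>V. if t = v then ?r v t else 0)" unfolding Dm_def by (intro sum.cong refl) auto
    thus ?thesis using v fin res_self[OF cg v] by simp
  qed
  have r: "Dm V E (Inr e) (Inr e) = (\<Sum>t\<in>V. \<Sum>p\<in>V. if t \<in> e \<and> p \<in> e then ?r p t / 4 else 0)" for e
    unfolding Dm_def Rr_def
  proof (intro sum.cong refl)
    fix t show "wt (Inr e) t * (\<Sum>p\<in>V. wt (Inr e) p * ?r p t) = (\<Sum>p\<in>V. if t \<in> e \<and> p \<in> e then ?r p t / 4 else 0)"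
      unfolding sum_distrib_left by (intro sum.cong refl) auto
  qed
  have "(\<Sum>g\<in>tri_vertices V E. Dm V E g g) = (\<Sum>e\<in>E. \<Sum>t\<in>V. \<Sum>p\<in>V. if t \<in> e \<and> p \<in> e then ?r p t / 4 else 0)"
    unfolding sum_VT[OF fin finE] using l r by simp
  also have "\<dots> = (\<Sum>t\<in>V. \<Sum>p\<in>V. \<Sum>e\<in>E. if t \<in> e \<and> p \<in> e then ?r p t / 4 else 0)"
    by (simp add: sum.swap[of _ E])
  also have "\<dots> = (\<Sum>t\<in>V. \<Sum>p\<in>V. if adj E p t then ?r p t / 4 else 0)"
  proof (intro sum.cong refl)
    fix t p assume t: "t \<in> V" and p: "p \<in> V"
    show "(\<Sum>e\<in>E. if t \<in> e \<and> p \<in> e then ?r p t / 4 else 0) = (if adj E p t then ?r p t / 4 else 0)"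
    proof (cases "p = t")
      case True
      thus ?thesis using sg_adj[OF sg, of t t] by (simp add: res_self[OF cg t] cong: if_cong)
    next
      case False
      show ?thesis unfolding sum_if_const[OF finE] edge_count[OF sg p t False] by simp
    qed
  qed
  also have "\<dots> = (\<Sum>p\<in>V. \<Sum>t\<in>V. if adj E p t then ?r p t else 0) / 4"
  proof -
    have "(\<Sum>t\<in>V. \<Sum>p\<in>V. if adj E p t then ?r p t / 4 else 0) = (\<Sum>p\<in>V. \<Sum>t\<in>V. if adj E p t then ?r p t / 4 else 0)"
      by (rule sum.swap)
    also have "\<dots> = (\<Sum>p\<in>V. \<Sum>t\<in>V. (if adj E p t then ?r p t else 0) / 4)"
      by (intro sum.cong refl) simp
    also have "\<dots> = (\<Sum>p\<in>V. \<Sum>t\<in>V. if adj E p t then ?r p t else 0) / 4"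
      by (simp add: sum_divide_distrib)
    finally show ?thesis .
  qed
  also have "\<dots> = (real (card V) - 1) / 2" using foster[OF cg] by simp
  finally show ?thesis .
qed



lemma S_eq:
  assumes cg: "connected_graph V E"
  shows "(\<Sum>t\<in>V. (1 + real (Defs.degree V E t) / 2) * (\<Sum>p\<in>V. (1 + real (Defs.degree V E p) / 2) * resistance V E p t))
    = 2 * kirchhoff V E + add_deg_kirchhoff V E + mult_deg_kirchhoff V E / 2"
proof -
  have sg: "simple_graph V E" using cg cg_sg by blast
  have fin: "finite V" using sg sg_finite by blast
  let ?r = "resistance V E"
  let ?d = "\<lambda>x. real (Defs.degree V E x)"
  let ?g = "\<lambda>p t. (1 + ?d p / 2) * (1 + ?d t / 2) * ?r p t"
  have "(\<Sum>t\<in>V. (1 + ?d t / 2) * (\<Sum>p\<in>V. (1 + ?d p / 2) * ?r p t)) = (\<Sum>t\<in>V. \<Sum>p\<in>V. ?g p t)"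
  proof (intro sum.cong refl)
    fix t show "(1 + ?d t / 2) * (\<Sum>p\<in>V. (1 + ?d p / 2) * ?r p t) = (\<Sum>p\<in>V. ?g p t)"
      unfolding sum_distrib_left by (intro sum.cong refl) (simp add: algebra_simps)
  qed
  also have "\<dots> = (\<Sum>p\<in>V. \<Sum>t\<in>V. ?g p t)" by (rule sum.swap)
  also have "\<dots> = (\<Sum>p\<in>V. \<Sum>t\<in>V - {p}. ?g p t)"
  proof (rule sum.cong[OF refl])
    fix p assume p: "p \<in> V"
    have "(\<Sum>t\<in>V. ?g p t) = ?g p p + (\<Sum>t\<in>V - {p}. ?g p t)" using fin p by (simp add: sum.remove)
    thus "(\<Sum>t\<in>V. ?g p t) = (\<Sum>t\<in>V - {p}. ?g p t)" using res_self[OF cg p] by simp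
  qed
  also have "\<dots> = (\<Sum>p\<in>V. \<Sum>t\<in>V - {p}. ?r p t + ((?d p + ?d t) * ?r p t) / 2 + (?d p * ?d t * ?r p t) / 4)"
    by (intro sum.cong refl) (simp add: field_simps)
  also have "\<dots> = (\<Sum>p\<in>V. \<Sum>t\<in>V - {p}. ?r p t) + (\<Sum>p\<in>V. \<Sum>t\<in>V - {p}. (?d p + ?d t) * ?r p t) / 2
      + (\<Sum>p\<in>V. \<Sum>t\<in>V - {p}. ?d p * ?d t * ?r p t) / 4"
    by (simp add: sum.distrib sum_divide_distrib)
  also have "\<dots> = 2 * kirchhoff V E + add_deg_kirchhoff V E + mult_deg_kirchhoff V E / 2"
    unfolding kirchhoff_def add_deg_kirchhoff_def mult_deg_kirchhoff_def by simp
  finally show ?thesis .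
qed

theorem theorem4p3:
  fixes V :: "'a set" and E :: "'a set set"
  assumes "connected_graph V E"
    and "card V \<ge> 2"
  defines "n \<equiv> real (card V)" and "m \<equiv> real (card E)"
  shows "kirchhoff (tri_vertices V E) (tri_edges E) =
           2/3 * kirchhoff V E + 1/3 * add_deg_kirchhoff V E + 1/6 * mult_deg_kirchhoff V E
           + (3 * m^2 - n^2 + 2 * m * n - 2 * m + n) / 6"
proof -
  have cg: "connected_graph V E" by fact
  have sg: "simple_graph V E" using cg cg_sg by blast
  have fin: "finite V" using sg sg_finite by blast
  have finE: "finite E" using sg sg_finite_E by blast
  let ?T = "tri_vertices V E"
  have finT: "finite ?T" unfolding tri_vertices_def using fin finE by simp
  define G where "G = (\<lambda>a b. cc a + cc b + (Dm V E a b + Dm V E b a - Dm V E a a - Dm V E b b) / 3)"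
  define N where "N = real (card ?T)"
  define C where "C = (\<Sum>a\<in>?T. cc a)"
  define SD where "SD = (\<Sum>a\<in>?T. \<Sum>b\<in>?T. Dm V E a b)"
  define DD where "DD = (\<Sum>a\<in>?T. Dm V E a a)"
  have inner: "(\<Sum>b\<in>?T - {a}. resistance ?T (tri_edges E) a b) = (\<Sum>b\<in>?T. G a b) - 2 * cc a" if a: "a \<in> ?T" for a
  proof -
    have "(\<Sum>b\<in>?T - {a}. resistance ?T (tri_edges E) a b) = (\<Sum>b\<in>?T - {a}. G a b)"
      by (intro sum.cong refl) (use resT[OF cg a] in \<open>auto simp: G_def\<close>)
    also have "\<dots> = (\<Sum>b\<in>?T. G a b) - G a a" using finT a by (simp add: sum_diff1)
    finally show ?thesis unfolding G_def by simp
  qed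
  have "kirchhoff ?T (tri_edges E) = (\<Sum>a\<in>?T. (\<Sum>b\<in>?T. G a b) - 2 * cc a) / 2"
    unfolding kirchhoff_def by (simp add: inner)
  also have "(\<Sum>a\<in>?T. (\<Sum>b\<in>?T. G a b) - 2 * cc a) = (\<Sum>a\<in>?T. \<Sum>b\<in>?T. G a b) - 2 * C"
    unfolding C_def by (simp add: sum_subtractf sum_distrib_left)
  also have "(\<Sum>a\<in>?T. \<Sum>b\<in>?T. G a b) = 2 * N * C + (2 * SD - 2 * N * DD) / 3"
  proof -
    have "(\<Sum>a\<in>?T. \<Sum>b\<in>?T. G a b) = (\<Sum>a\<in>?T. \<Sum>b\<in>?T. cc a) + (\<Sum>a\<in>?T. \<Sum>b\<in>?T. cc b)
      + ((\<Sum>a\<in>?T. \<Sum>b\<in>?T. Dm V E a b) + (\<Sum>a\<in>?T. \<Sum>b\<in>?T. Dm V E b a)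
         - (\<Sum>a\<in>?T. \<Sum>b\<in>?T. Dm V E a a) - (\<Sum>a\<in>?T. \<Sum>b\<in>?T. Dm V E b b)) / 3"
    proof -
      have e2: "(\<Sum>a\<in>?T. \<Sum>b\<in>?T. G a b) = (\<Sum>a\<in>?T. \<Sum>b\<in>?T. cc a) + (\<Sum>a\<in>?T. \<Sum>b\<in>?T. cc b)
         + (\<Sum>a\<in>?T. \<Sum>b\<in>?T. Dm V E a b + Dm V E b a - Dm V E a a - Dm V E b b) / 3"
        unfolding G_def by (simp only: sum.distrib sum_divide_distrib[symmetric])
      have e1: "(\<Sum>a\<in>?T. \<Sum>b\<in>?T. Dm V E a b + Dm V E b a - Dm V E a a - Dm V E b b) =
         (\<Sum>a\<in>?T. \<Sum>b\<in>?T. Dm V E a b) + (\<Sum>a\<in>?T. \<Sum>b\<in>?T. Dm V E b a)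
         - (\<Sum>a\<in>?T. \<Sum>b\<in>?T. Dm V E a a) - (\<Sum>a\<in>?T. \<Sum>b\<in>?T. Dm V E b b)"
        by (simp only: sum.distrib sum_subtractf)
      show ?thesis unfolding e2 e1 ..
    qed
    also have "(\<Sum>a\<in>?T. \<Sum>b\<in>?T. cc a) = N * C" unfolding N_def C_def by (simp add: sum_distrib_left)
    also have "(\<Sum>a\<in>?T. \<Sum>b\<in>?T. cc b) = N * C" unfolding N_def C_def by simp
    also have "(\<Sum>a\<in>?T. \<Sum>b\<in>?T. Dm V E b a) = SD" unfolding SD_def by (rule sum.swap)
    also have "(\<Sum>a\<in>?T. \<Sum>b\<in>?T. Dm V E a a) = N * DD" unfolding N_def DD_def by (simp add: sum_distrib_left)
    also have "(\<Sum>a\<in>?T. \<Sum>b\<in>?T. Dm V E b b) = N * DD" unfolding N_def DD_def by simp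
    finally show ?thesis unfolding SD_def by simp
  qed
  finally have kT: "kirchhoff ?T (tri_edges E) = (2 * N * C + (2 * SD - 2 * N * DD) / 3 - 2 * C) / 2" .
  have N: "N = n + m" unfolding N_def n_def m_def using card_VT[OF fin finE] by simp
  have C: "C = m / 2" unfolding C_def m_def by (rule sum_cc[OF sg])
  have DD: "DD = (n - 1) / 2" unfolding DD_def n_def by (rule DD_eq[OF cg])
  have SD: "SD = 2 * kirchhoff V E + add_deg_kirchhoff V E + mult_deg_kirchhoff V E / 2"
    unfolding SD_def SD_eq[OF cg] by (rule S_eq[OF cg])
  show ?thesis unfolding kT N C DD SD by (simp add: field_simps power2_eq_square)
qed

end
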